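(* Let $a\in\mathbb R^n$ with $a\geq 0$, $P\in\mathbb R^{n\times n}$ with $P\geq 0$, and $b:\mathbb R^n\times\mathbb R^n\to\mathbb R^n$ bilinear with $b(x,y)\geq0$ for all $x,y\geq 0$. Let $x_0\geq 0$ and $x_{k+1}=a+Px_k+b(x_k,x_k)$ for $k\geq 0$, and suppose the sequence $(x_k)$ is nondecreasing and converges to a limit $x_\ast$ with $x_\ast>x_0$ (strictly, in every component). Then $\rho\big(P+b(x_\ast,\cdot)+b(\cdot,x_\ast)\big)\leq 1$.
   Context: Inequalities between vectors/matrices are componentwise; $\rho$ denotes the spectral radius. For $x\in\mathbb R^n$, $b(x,\cdot)$ and $b(\cdot,x)$ denote the $n\times n$ matrices of the linear maps $y\mapsto b(x,y)$ and $y\mapsto b(y,x)$ respectively. The matrix $P+b(x,\cdot)+b(\cdot,x)$ is the Jacobian at $x$ of the map $x\mapsto a+Px+b(x,x)$. *)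

theory Defs
  imports "Jordan_Normal_Form.Spectral_Radius"
begin

definition bilinear_on :: "nat \<Rightarrow> (real vec \<Rightarrow> real vec \<Rightarrow> real vec) \<Rightarrow> bool" where
  "bilinear_on n b \<longleftrightarrow>
     (\<forall>x\<in>carrier_vec n. \<forall>y\<in>carrier_vec n. b x y \<in> carrier_vec n) \<and>
     (\<forall>x\<in>carrier_vec n. \<forall>x'\<in>carrier_vec n. \<forall>y\<in>carrier_vec n. \<forall>c d.
        b (c \<cdot>\<^sub>v x + d \<cdot>\<^sub>v x') y = c \<cdot>\<^sub>v b x y + d \<cdot>\<^sub>v b x' y) \<and>
     (\<forall>x\<in>carrier_vec n. \<forall>y\<in>carrier_vec n. \<forall>y'\<in>carrier_vec n. \<forall>c d.
        b x (c \<cdot>\<^sub>v y + d \<cdot>\<^sub>v y') = c \<cdot>\<^sub>v b x y + d \<cdot>\<^sub>v b x y')"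

definition bmat_left :: "nat \<Rightarrow> (real vec \<Rightarrow> real vec \<Rightarrow> real vec) \<Rightarrow> real vec \<Rightarrow> real mat" where
  "bmat_left n b x = mat n n (\<lambda>(i,j). b x (unit_vec n j) $ i)"

definition bmat_right :: "nat \<Rightarrow> (real vec \<Rightarrow> real vec \<Rightarrow> real vec) \<Rightarrow> real vec \<Rightarrow> real mat" where
  "bmat_right n b x = mat n n (\<lambda>(i,j). b (unit_vec n j) x $ i)"

definition real_spectral_radius :: "real mat \<Rightarrow> real" where
  "real_spectral_radius A = spectral_radius (map_mat complex_of_real A)"

end

theory Submission imports Defs begin


lemma bilL: "bilinear_on n b \<Longrightarrow> x \<in> carrier_vec n \<Longrightarrow> x' \<in> carrier_vec n \<Longrightarrow> y \<in> carrier_vec n \<Longrightarrow>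
  b (c \<cdot>\<^sub>v x + d \<cdot>\<^sub>v x') y = c \<cdot>\<^sub>v b x y + d \<cdot>\<^sub>v b x' y"
  unfolding bilinear_on_def by blast
lemma bilR: "bilinear_on n b \<Longrightarrow> x \<in> carrier_vec n \<Longrightarrow> y' \<in> carrier_vec n \<Longrightarrow> y \<in> carrier_vec n \<Longrightarrow>
  b x (c \<cdot>\<^sub>v y + d \<cdot>\<^sub>v y') = c \<cdot>\<^sub>v b x y + d \<cdot>\<^sub>v b x y'"
  unfolding bilinear_on_def by blast
lemma bilC: "bilinear_on n b \<Longrightarrow> x \<in> carrier_vec n \<Longrightarrow> y \<in> carrier_vec n \<Longrightarrow> b x y \<in> carrier_vec n"
  unfolding bilinear_on_def by blast

lemma bil_zero_right:
  assumes b: "bilinear_on n b" and u: "u \<in> carrier_vec n" and i: "i < n"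
  shows "b u (0\<^sub>v n) $ i = 0"
proof -
  have z: "(0::real) \<cdot>\<^sub>v 0\<^sub>v n + 0 \<cdot>\<^sub>v 0\<^sub>v n = 0\<^sub>v n" by (intro eq_vecI, auto)
  have "b u ((0::real) \<cdot>\<^sub>v 0\<^sub>v n + 0 \<cdot>\<^sub>v 0\<^sub>v n) = 0 \<cdot>\<^sub>v b u (0\<^sub>v n) + 0 \<cdot>\<^sub>v b u (0\<^sub>v n)"
    by (rule bilR[OF b u], auto)
  moreover have "b u (0\<^sub>v n) \<in> carrier_vec n" using bilC[OF b u] by auto
  ultimately show ?thesis using z i by (metis carrier_vecD index_add_vec(1) index_smult_vec(1,2) mult_zero_left add_0)
qed

lemma bil_zero_left:
  assumes b: "bilinear_on n b" and u: "u \<in> carrier_vec n" and i: "i < n"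
  shows "b (0\<^sub>v n) u $ i = 0"
proof -
  have z: "(0::real) \<cdot>\<^sub>v 0\<^sub>v n + 0 \<cdot>\<^sub>v 0\<^sub>v n = 0\<^sub>v n" by (intro eq_vecI, auto)
  have "b ((0::real) \<cdot>\<^sub>v 0\<^sub>v n + 0 \<cdot>\<^sub>v 0\<^sub>v n) u = 0 \<cdot>\<^sub>v b (0\<^sub>v n) u + 0 \<cdot>\<^sub>v b (0\<^sub>v n) u"
    by (rule bilL[OF b _ _ u], auto)
  moreover have "b (0\<^sub>v n) u \<in> carrier_vec n" using bilC[OF b _ u] by auto
  ultimately show ?thesis using z i by (metis carrier_vecD index_add_vec(1) index_smult_vec(1,2) mult_zero_left add_0)
qed

lemma trunc_step:
  assumes "m < n" "y \<in> carrier_vec n"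
  shows "vec n (\<lambda>j. if j < Suc m then y $ j else 0) =
     (1::real) \<cdot>\<^sub>v vec n (\<lambda>j. if j < m then y $ j else 0) + (y $ m) \<cdot>\<^sub>v unit_vec n m"
  using assms by (intro eq_vecI, auto simp: unit_vec_def less_Suc_eq)

lemma bil_expand_right:
  assumes b: "bilinear_on n b" and u: "u \<in> carrier_vec n" and y: "y \<in> carrier_vec n" and i: "i < n"
  shows "b u y $ i = (\<Sum>j<n. y $ j * b u (unit_vec n j) $ i)"
proof -
  have "m \<le> n \<Longrightarrow> b u (vec n (\<lambda>j. if j < m then y $ j else 0)) $ i = (\<Sum>j<m. y $ j * b u (unit_vec n j) $ i)" for m
  proof (induction m)
    case 0
    have "vec n (\<lambda>j. if j < 0 then y $ j else 0) = 0\<^sub>v n" by (intro eq_vecI, auto)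
    then show ?case using bil_zero_right[OF b u i] by simp
  next
    case (Suc m)
    let ?t = "vec n (\<lambda>j. if j < m then y $ j else 0)"
    have t: "?t \<in> carrier_vec n" by auto
    have e: "unit_vec n m \<in> carrier_vec n" by auto
    have "b u (1 \<cdot>\<^sub>v ?t + (y $ m) \<cdot>\<^sub>v unit_vec n m) = 1 \<cdot>\<^sub>v b u ?t + (y $ m) \<cdot>\<^sub>v b u (unit_vec n m)"
      by (rule bilR[OF b u e t])
    moreover have "b u ?t \<in> carrier_vec n" "b u (unit_vec n m) \<in> carrier_vec n"
      using bilC[OF b u] t e by auto
    ultimately show ?case using Suc trunc_step[of m n y] y i by simp
  qed
  from this[of n] have "b u (vec n (\<lambda>j. if j < n then y $ j else 0)) $ i = (\<Sum>j<n. y $ j * b u (unit_vec n j) $ i)" by simp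
  moreover have "vec n (\<lambda>j. if j < n then y $ j else 0) = y" using y by (intro eq_vecI, auto)
  ultimately show ?thesis by simp
qed

lemma bil_expand_left:
  assumes b: "bilinear_on n b" and u: "u \<in> carrier_vec n" and y: "y \<in> carrier_vec n" and i: "i < n"
  shows "b y u $ i = (\<Sum>j<n. y $ j * b (unit_vec n j) u $ i)"
proof -
  have "m \<le> n \<Longrightarrow> b (vec n (\<lambda>j. if j < m then y $ j else 0)) u $ i = (\<Sum>j<m. y $ j * b (unit_vec n j) u $ i)" for m
  proof (induction m)
    case 0
    have "vec n (\<lambda>j. if j < 0 then y $ j else 0) = 0\<^sub>v n" by (intro eq_vecI, auto)
    then show ?case using bil_zero_left[OF b u i] by simp
  next
    case (Suc m)
    let ?t = "vec n (\<lambda>j. if j < m then y $ j else 0)"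
    have t: "?t \<in> carrier_vec n" by auto
    have e: "unit_vec n m \<in> carrier_vec n" by auto
    have "b (1 \<cdot>\<^sub>v ?t + (y $ m) \<cdot>\<^sub>v unit_vec n m) u = 1 \<cdot>\<^sub>v b ?t u + (y $ m) \<cdot>\<^sub>v b (unit_vec n m) u"
      by (rule bilL[OF b t e u])
    moreover have "b ?t u \<in> carrier_vec n" "b (unit_vec n m) u \<in> carrier_vec n"
      using bilC[OF b _ u] t e by auto
    ultimately show ?case using Suc trunc_step[of m n y] y i by simp
  qed
  from this[of n] have "b (vec n (\<lambda>j. if j < n then y $ j else 0)) u $ i = (\<Sum>j<n. y $ j * b (unit_vec n j) u $ i)" by simp
  moreover have "vec n (\<lambda>j. if j < n then y $ j else 0) = y" using y by (intro eq_vecI, auto)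
  ultimately show ?thesis by simp
qed

lemma bil_expand:
  assumes b: "bilinear_on n b" and u: "u \<in> carrier_vec n" and y: "y \<in> carrier_vec n" and i: "i < n"
  shows "b u y $ i = (\<Sum>j<n. \<Sum>l<n. u $ j * y $ l * b (unit_vec n j) (unit_vec n l) $ i)"
proof -
  have "b u y $ i = (\<Sum>j<n. u $ j * b (unit_vec n j) y $ i)" by (rule bil_expand_left[OF b y u i])
  also have "\<dots> = (\<Sum>j<n. u $ j * (\<Sum>l<n. y $ l * b (unit_vec n j) (unit_vec n l) $ i))"
    using bil_expand_right[OF b _ y i] by (intro sum.cong refl, auto)
  also have "\<dots> = (\<Sum>j<n. \<Sum>l<n. u $ j * y $ l * b (unit_vec n j) (unit_vec n l) $ i)"
    by (simp add: sum_distrib_left mult.assoc)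
  finally show ?thesis .
qed

definition Bf :: "nat \<Rightarrow> (nat\<Rightarrow>nat\<Rightarrow>nat\<Rightarrow>real) \<Rightarrow> nat \<Rightarrow> (nat\<Rightarrow>real) \<Rightarrow> (nat\<Rightarrow>real) \<Rightarrow> real" where
  "Bf n \<beta> i u v = (\<Sum>j<n. \<Sum>l<n. u j * v l * \<beta> i j l)"

lemma Bf_nonneg:
  assumes "\<And>j l. j < n \<Longrightarrow> l < n \<Longrightarrow> \<beta> i j l \<ge> 0" "\<And>j. j < n \<Longrightarrow> u j \<ge> 0" "\<And>l. l < n \<Longrightarrow> v l \<ge> 0"
  shows "Bf n \<beta> i u v \<ge> 0"
  unfolding Bf_def by (intro sum_nonneg mult_nonneg_nonneg, auto intro: assms)

lemma Bf_mono:
  assumes "\<And>j l. j < n \<Longrightarrow> l < n \<Longrightarrow> \<beta> i j l \<ge> 0" "\<And>j. j < n \<Longrightarrow> u j \<ge> 0" "\<And>l. l < n \<Longrightarrow> v l \<ge> 0"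
   "\<And>j. j < n \<Longrightarrow> u j \<le> u' j" "\<And>l. l < n \<Longrightarrow> v l \<le> v' l"
  shows "Bf n \<beta> i u v \<le> Bf n \<beta> i u' v'"
  unfolding Bf_def
proof (intro sum_mono)
  fix j l assume j: "j \<in> {..<n}" and l: "l \<in> {..<n}"
  have "u j * v l \<le> u' j * v' l" using assms j l by (meson lessThan_iff mult_mono order_trans)
  then show "u j * v l * \<beta> i j l \<le> u' j * v' l * \<beta> i j l" using assms j l by (intro mult_right_mono, auto)
qed

lemma Bf_diff: "Bf n \<beta> i u u - Bf n \<beta> i w w = Bf n \<beta> i u (\<lambda>l. u l - w l) + Bf n \<beta> i (\<lambda>j. u j - w j) w"
  unfolding Bf_def by (simp add: sum_subtractf[symmetric] sum.distrib[symmetric] algebra_simps)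

lemma Bf_split2: "Bf n \<beta> i u v = Bf n \<beta> i u w + Bf n \<beta> i u (\<lambda>l. v l - w l)"
  unfolding Bf_def by (simp add: sum.distrib[symmetric] algebra_simps)

lemma Bf_scale2: "Bf n \<beta> i u (\<lambda>l. e * v l) = e * Bf n \<beta> i u v"
  unfolding Bf_def by (simp add: sum_distrib_left algebra_simps)

lemma Bf_swap: "Bf n \<beta> i u v = (\<Sum>j<n. \<Sum>l<n. v j * u l * \<beta> i l j)"
  unfolding Bf_def by (subst sum.swap, simp add: algebra_simps)

lemma sum_unit: "j < n \<Longrightarrow> (\<Sum>m<n. f m * unit_vec n j $ m) = (f j :: real)"
  by (simp add: unit_vec_def if_distrib cong: if_cong)

lemma mv_sum: "M \<in> carrier_mat n n \<Longrightarrow> v \<in> carrier_vec n \<Longrightarrow> i < n \<Longrightarrow>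
   (M *\<^sub>v v) $ i = (\<Sum>j<n. M $$ (i,j) * v $ j)"
  by (auto simp: scalar_prod_def atLeast0LessThan intro!: sum.cong)

lemma mv_mono:
  assumes M: "M \<in> carrier_mat n n" "\<forall>i<n. \<forall>j<n. M $$ (i,j) \<ge> (0::real)"
    and u: "u \<in> carrier_vec n" and v: "v \<in> carrier_vec n" and le: "\<forall>j<n. u $ j \<le> v $ j" and i: "i < n"
  shows "(M *\<^sub>v u) $ i \<le> (M *\<^sub>v v) $ i"
  unfolding mv_sum[OF M(1) u i] mv_sum[OF M(1) v i]
  using M(2) le i by (intro sum_mono mult_left_mono, auto)

lemma pow_nonneg:
  assumes M: "M \<in> carrier_mat n n" "\<forall>i<n. \<forall>j<n. M $$ (i,j) \<ge> (0::real)"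
  shows "\<forall>i<n. \<forall>j<n. (M ^\<^sub>m m) $$ (i,j) \<ge> 0"
proof (induction m)
  case 0 then show ?case using M by auto
next
  case (Suc m)
  have c: "M ^\<^sub>m m \<in> carrier_mat n n" using M by auto
  show ?case
  proof (intro allI impI)
    fix i j assume i: "i < n" and j: "j < n"
    have "(M ^\<^sub>m Suc m) $$ (i,j) = (\<Sum>l\<in>{0..<n}. (M ^\<^sub>m m) $$ (i,l) * M $$ (l,j))"
      using i j c M(1) by (auto simp: scalar_prod_def)
    also have "\<dots> \<ge> 0" using Suc M(2) i j by (intro sum_nonneg mult_nonneg_nonneg, auto)
    finally show "(M ^\<^sub>m Suc m) $$ (i,j) \<ge> 0" .
  qed
qed

lemma sr_bound:
  assumes J: "J \<in> carrier_mat n n" and n: "n > 0" and c: "c > 0"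
    and bnd: "\<And>m i j. i < n \<Longrightarrow> j < n \<Longrightarrow> 0 \<le> (J ^\<^sub>m m) $$ (i,j) \<and> (J ^\<^sub>m m) $$ (i,j) \<le> W i j * c ^ m"
  shows "real_spectral_radius J \<le> c"
proof -
  define Jc where "Jc = map_mat complex_of_real J"
  have Jc: "Jc \<in> carrier_mat n n" using J unfolding Jc_def by auto
  from spectral_radius_mem_max(1)[OF Jc n] obtain lam where lam: "lam \<in> spectrum Jc"
    and r: "spectral_radius Jc = norm lam" by auto
  from lam obtain v where ev: "eigenvector Jc v lam" unfolding spectrum_def eigenvalue_def by auto
  have v: "v \<in> carrier_vec n" "v \<noteq> 0\<^sub>v n" using ev Jc unfolding eigenvector_def by auto
  obtain i where i: "i < n" "v $ i \<noteq> 0"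
  proof (rule ccontr)
    assume "\<not> thesis"
    then have "\<forall>i<n. v $ i = 0" using that by blast
    then have "v = 0\<^sub>v n" using v(1) by (intro eq_vecI, auto)
    then show False using v(2) by simp
  qed
  define R where "R = (\<Sum>j<n. W i j * norm (v $ j))"
  have key: "norm lam ^ m * norm (v $ i) \<le> c ^ m * R" for m
  proof -
    have "Jc ^\<^sub>m m *\<^sub>v v = lam ^ m \<cdot>\<^sub>v v" by (rule eigenvector_pow[OF Jc ev])
    moreover have "Jc ^\<^sub>m m = map_mat complex_of_real (J ^\<^sub>m m)"
      unfolding Jc_def by (rule of_real_hom.mat_hom_pow[OF J, symmetric])
    ultimately have e1: "map_mat complex_of_real (J ^\<^sub>m m) *\<^sub>v v = lam ^ m \<cdot>\<^sub>v v" by simp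
    have Jm: "map_mat complex_of_real (J ^\<^sub>m m) \<in> carrier_mat n n" using J by simp
    have "lam ^ m * v $ i = (map_mat complex_of_real (J ^\<^sub>m m) *\<^sub>v v) $ i"
      unfolding e1 using v(1) i(1) by simp
    also have "\<dots> = (\<Sum>j<n. map_mat complex_of_real (J ^\<^sub>m m) $$ (i,j) * v $ j)"
      by (rule mv_sum[OF Jm v(1) i(1)])
    also have "\<dots> = (\<Sum>j<n. complex_of_real ((J ^\<^sub>m m) $$ (i,j)) * v $ j)"
      using J i(1) by (intro sum.cong refl, auto)
    finally have eq: "lam ^ m * v $ i = (\<Sum>j<n. complex_of_real ((J ^\<^sub>m m) $$ (i,j)) * v $ j)" .
    have "norm lam ^ m * norm (v $ i) = norm (lam ^ m * v $ i)" by (simp add: norm_mult norm_power)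
    also have "\<dots> \<le> (\<Sum>j<n. norm (complex_of_real ((J ^\<^sub>m m) $$ (i,j)) * v $ j))"
      unfolding eq by (rule norm_sum)
    also have "\<dots> = (\<Sum>j<n. (J ^\<^sub>m m) $$ (i,j) * norm (v $ j))"
      using bnd i(1) by (intro sum.cong refl, auto simp: norm_mult)
    also have "\<dots> \<le> (\<Sum>j<n. (W i j * c ^ m) * norm (v $ j))"
      using bnd i(1) by (intro sum_mono mult_right_mono, auto)
    also have "\<dots> = c ^ m * R" unfolding R_def by (simp add: sum_distrib_left algebra_simps)
    finally show ?thesis .
  qed
  have "norm lam \<le> c"
  proof (rule ccontr)
    assume "\<not> norm lam \<le> c"
    then have q: "norm lam / c > 1" using c by simp
    obtain m where m: "R / norm (v $ i) < (norm lam / c) ^ m" using real_arch_pow[OF q] by blast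
    have nv: "norm (v $ i) > 0" using i by simp
    have "(norm lam / c) ^ m * norm (v $ i) \<le> R"
      using key[of m] c by (simp add: power_divide field_simps)
    then have "(norm lam / c) ^ m \<le> R / norm (v $ i)" using nv by (simp add: field_simps)
    then show False using m by simp
  qed
  then show ?thesis unfolding real_spectral_radius_def Jc_def[symmetric] r .
qed

lemma sum_unit2: "j < n \<Longrightarrow> (\<Sum>l<n. u * unit_vec n j $ l * g l) = u * (g j :: real)"
proof -
  assume j: "j < n"
  have "(\<Sum>l<n. u * unit_vec n j $ l * g l) = (\<Sum>l<n. if l = j then u * g l else 0)"
    by (intro sum.cong, auto simp: unit_vec_def)
  then show ?thesis using j by simp
qed

lemma sum_unit3: "j < n \<Longrightarrow> (\<Sum>l<n. unit_vec n j $ l * u * g l) = u * (g j :: real)"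
  using sum_unit2[of j n u g] by (simp add: mult.commute mult.left_commute)
lemma sum_unit4: "(j::nat) < n \<Longrightarrow> (\<Sum>l<n. u * (if l = j then 1 else 0) * g l) = u * (g j :: real)"
  using sum_unit2[of j n u g] by (simp add: unit_vec_def)
lemma sum_unit5: "(j::nat) < n \<Longrightarrow> (\<Sum>l<n. (if l = j then 1 else 0) * u * g l) = u * (g j :: real)"
  using sum_unit3[of j n u g] by (simp add: unit_vec_def)


theorem mainTheorem6:
  fixes n :: nat and a x0 xs :: "real vec" and P :: "real mat"
    and b :: "real vec \<Rightarrow> real vec \<Rightarrow> real vec" and x :: "nat \<Rightarrow> real vec"
  assumes n: "n \<ge> 1"
    and a: "a \<in> carrier_vec n" "\<forall>i<n. a $ i \<ge> 0"
    and P: "P \<in> carrier_mat n n" "\<forall>i<n. \<forall>j<n. P $$ (i,j) \<ge> 0"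
    and b: "bilinear_on n b"
    and bnonneg: "\<forall>u\<in>carrier_vec n. \<forall>v\<in>carrier_vec n.
                   (\<forall>i<n. u $ i \<ge> 0) \<longrightarrow> (\<forall>i<n. v $ i \<ge> 0) \<longrightarrow> (\<forall>i<n. b u v $ i \<ge> 0)"
    and x0: "x 0 = x0" "x0 \<in> carrier_vec n" "\<forall>i<n. x0 $ i \<ge> 0"
    and rec: "\<forall>k. x (Suc k) = a + P *\<^sub>v x k + b (x k) (x k)"
    and mono: "\<forall>k. \<forall>i<n. x k $ i \<le> x (Suc k) $ i"
    and xs: "xs \<in> carrier_vec n" "\<forall>i<n. (\<lambda>k. x k $ i) \<longlonglongrightarrow> xs $ i"
    and strict: "\<forall>i<n. xs $ i > x0 $ i"
  shows "real_spectral_radius (P + bmat_left n b xs + bmat_right n b xs) \<le> 1"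
proof -
  define \<beta> where "\<beta> i j l = b (unit_vec n j) (unit_vec n l) $ i" for i j l
  have \<beta>0: "\<beta> i j l \<ge> 0" if "i < n" "j < n" "l < n" for i j l
    using bnonneg that unfolding \<beta>_def by (auto simp: unit_vec_def)
  have bexp: "b u v $ i = Bf n \<beta> i (($) u) (($) v)" if "u \<in> carrier_vec n" "v \<in> carrier_vec n" "i < n" for u v i
    using bil_expand[OF b that] unfolding Bf_def \<beta>_def by simp
  have Pv: "(P *\<^sub>v v) $ i = (\<Sum>j<n. P $$ (i,j) * v $ j)" if "v \<in> carrier_vec n" "i < n" for v i
    using that P(1) by (auto simp: scalar_prod_def atLeast0LessThan intro!: sum.cong)
  have xc: "x k \<in> carrier_vec n" for k
  proof (induction k)
    case 0 then show ?case using x0 by simp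
  next
    case (Suc k) then show ?case using rec a P(1) bilC[OF b Suc Suc] by simp
  qed
  have reci: "x (Suc k) $ i = a $ i + (\<Sum>j<n. P $$ (i,j) * x k $ j) + Bf n \<beta> i (($) (x k)) (($) (x k))"
    if "i < n" for k i
  proof -
    have d: "dim_vec (b (x k) (x k)) = n" using bilC[OF b xc xc] by auto
    have "x (Suc k) $ i = a $ i + (P *\<^sub>v x k) $ i + b (x k) (x k) $ i"
      using that rec a P(1) d by simp
    then show ?thesis using Pv[OF xc that] bexp[OF xc xc that] by simp
  qed
  have inc: "incseq (\<lambda>k. x k $ i)" if "i < n" for i
    using mono that by (intro incseq_SucI) auto
  have xle: "x k $ i \<le> xs $ i" if "i < n" for k i
    using incseq_le[OF inc xs(2)[rule_format]] that by blast
  have xge: "x0 $ i \<le> x k $ i" if "i < n" for k i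
    using inc[OF that] x0(1) unfolding incseq_def by (metis le0)
  have xnn: "x k $ i \<ge> 0" if "i < n" for k i using xge[OF that, of k] x0(3) that by (meson order_trans)
  have xsnn: "xs $ i \<ge> 0" if "i < n" for i using xle[OF that, of 0] xnn[OF that, of 0] by linarith
  have fixp: "xs $ i = a $ i + (\<Sum>j<n. P $$ (i,j) * xs $ j) + Bf n \<beta> i (($) xs) (($) xs)" if i: "i < n" for i
  proof -
    have l1: "(\<lambda>k. x (Suc k) $ i) \<longlonglongrightarrow> xs $ i" using xs(2) i LIMSEQ_Suc by blast
    have "(\<lambda>k. x (Suc k) $ i) \<longlonglongrightarrow> a $ i + (\<Sum>j<n. P $$ (i,j) * xs $ j) + Bf n \<beta> i (($) xs) (($) xs)"
      unfolding reci[OF i] Bf_def using xs(2) by (intro tendsto_intros, auto)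
    from LIMSEQ_unique[OF l1 this] show ?thesis .
  qed
  define d where "d k j = xs $ j - x k $ j" for k j
  have dnn: "d k j \<ge> 0" if "j < n" for k j using xle[OF that] unfolding d_def by simp
  have dle: "d k j \<le> xs $ j" if "j < n" for k j using xnn[OF that] unfolding d_def by simp
  have dmono: "d (Suc k) j \<le> d k j" if "j < n" for k j using mono that unfolding d_def by auto
  have dpos: "d 0 j > 0" if "j < n" for j using strict that x0(1) unfolding d_def by auto
  have dlim: "(\<lambda>k. d k j) \<longlonglongrightarrow> 0" if "j < n" for j
  proof -
    have "(\<lambda>k. xs $ j - x k $ j) \<longlonglongrightarrow> xs $ j - xs $ j" using xs(2) that by (intro tendsto_intros, auto)
    then show ?thesis unfolding d_def by simp
  qed
  have xd: "x k $ j = xs $ j - d k j" for k j unfolding d_def by simp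
  define Jm where "Jm i j = P $$ (i,j) + (\<Sum>l<n. xs $ l * \<beta> i l j) + (\<Sum>l<n. xs $ l * \<beta> i j l)" for i j
  have Jm0: "Jm i j \<ge> 0" if "i < n" "j < n" for i j
    unfolding Jm_def using P(2) that xsnn \<beta>0 by (intro add_nonneg_nonneg sum_nonneg mult_nonneg_nonneg, auto)
  define JD where "JD k i = (\<Sum>j<n. Jm i j * d k j)" for k i
  have JDe: "JD k i = (\<Sum>j<n. P $$ (i,j) * d k j) + Bf n \<beta> i (($) xs) (d k) + Bf n \<beta> i (d k) (($) xs)" for k i
    unfolding JD_def Jm_def Bf_swap[of n \<beta> i "($) xs"]
    by (simp add: Bf_def algebra_simps sum.distrib sum_distrib_left sum_distrib_right)
  have drec: "d (Suc k) i = (\<Sum>j<n. P $$ (i,j) * d k j) + Bf n \<beta> i (($) xs) (d k) + Bf n \<beta> i (d k) (($) (x k))"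
    if i: "i < n" for k i
  proof -
    have "d (Suc k) i = (\<Sum>j<n. P $$ (i,j) * xs $ j) - (\<Sum>j<n. P $$ (i,j) * x k $ j)
       + (Bf n \<beta> i (($) xs) (($) xs) - Bf n \<beta> i (($) (x k)) (($) (x k)))"
      unfolding d_def using fixp[OF i] reci[OF i, of k] by simp
    also have "(\<Sum>j<n. P $$ (i,j) * xs $ j) - (\<Sum>j<n. P $$ (i,j) * x k $ j) = (\<Sum>j<n. P $$ (i,j) * d k j)"
      unfolding d_def by (simp add: sum_subtractf[symmetric] algebra_simps)
    also have "Bf n \<beta> i (($) xs) (($) xs) - Bf n \<beta> i (($) (x k)) (($) (x k)) = Bf n \<beta> i (($) xs) (d k) + Bf n \<beta> i (d k) (($) (x k))"
      unfolding Bf_diff d_def by simp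
    finally show ?thesis by simp
  qed
  have drec2: "d (Suc k) i = JD k i - Bf n \<beta> i (d k) (d k)" if i: "i < n" for k i
  proof -
    have "Bf n \<beta> i (d k) (($) xs) = Bf n \<beta> i (d k) (($) (x k)) + Bf n \<beta> i (d k) (\<lambda>l. xs $ l - x k $ l)"
      by (rule Bf_split2)
    then show ?thesis unfolding JDe drec[OF i] by (simp add: d_def[symmetric])
  qed
  have T1: "(\<Sum>j<n. P $$ (i,j) * d k j) \<ge> 0" if "i < n" for i k
    using P(2) dnn that by (intro sum_nonneg mult_nonneg_nonneg, auto)
  have T2: "Bf n \<beta> i (($) xs) (d k) \<ge> 0" if "i < n" for i k
    using that by (intro Bf_nonneg \<beta>0 xsnn dnn)
  have T3: "Bf n \<beta> i (d k) (($) (x k)) \<ge> 0" if "i < n" for i k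
    using that by (intro Bf_nonneg \<beta>0 xnn dnn)
  have Bdd: "Bf n \<beta> i (d k) (d k) \<le> Bf n \<beta> i (($) xs) (d k)" if "i < n" for i k
    using that by (intro Bf_mono \<beta>0 dnn dle, auto)
  have lemA: "JD k i = 0" if i: "i < n" and z: "d (Suc k) i = 0" for k i
  proof -
    have "Bf n \<beta> i (($) xs) (d k) = 0" using z drec[OF i, of k] T1[OF i, of k] T2[OF i, of k] T3[OF i, of k] by linarith
    moreover have "Bf n \<beta> i (d k) (d k) \<ge> 0" using i by (intro Bf_nonneg \<beta>0 dnn)
    ultimately show ?thesis using z drec2[OF i, of k] Bdd[OF i, of k] by linarith
  qed
  have JDnn: "JD k i \<ge> 0" if "i < n" for k i
    unfolding JD_def using Jm0 dnn that by (intro sum_nonneg mult_nonneg_nonneg, auto)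
  have lemB: "Bf n \<beta> i (d k) (d k) \<le> e * JD k i"
    if i: "i < n" and e: "e \<ge> 0" and small: "\<forall>l<n. d k l \<le> e * d 0 l" for i k e
  proof -
    have "Bf n \<beta> i (d k) (d k) \<le> Bf n \<beta> i (d k) (\<lambda>l. e * xs $ l)"
    proof (rule Bf_mono)
      fix l assume l: "l < n"
      show "d k l \<le> e * xs $ l" using small l dle[OF l, of 0] e mult_left_mono order_trans by metis
    qed (use \<beta>0 i dnn in auto)
    also have "\<dots> = e * Bf n \<beta> i (d k) (($) xs)" by (rule Bf_scale2)
    also have "\<dots> \<le> e * JD k i" unfolding JDe using T1[OF i] T2[OF i] e by (intro mult_left_mono, auto)
    finally show ?thesis .
  qed
  define J where "J = P + bmat_left n b xs + bmat_right n b xs"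
  have Jc: "J \<in> carrier_mat n n" unfolding J_def bmat_left_def bmat_right_def using P(1) by auto
  have uc: "unit_vec n j \<in> carrier_vec n" for j by simp
  have Jij: "J $$ (i,j) = Jm i j" if i: "i < n" and j: "j < n" for i j
  proof -
    have L: "bmat_left n b xs $$ (i,j) = (\<Sum>l<n. xs $ l * \<beta> i l j)"
    proof -
      have "bmat_left n b xs $$ (i,j) = (\<Sum>l<n. \<Sum>m<n. xs $ l * unit_vec n j $ m * \<beta> i l m)"
        unfolding bmat_left_def using i j bexp[OF xs(1) uc i] by (simp add: Bf_def del: index_unit_vec)
      also have "\<dots> = (\<Sum>l<n. xs $ l * \<beta> i l j)" by (intro sum.cong refl sum_unit2[OF j])
      finally show ?thesis .
    qed
    have R: "bmat_right n b xs $$ (i,j) = (\<Sum>l<n. xs $ l * \<beta> i j l)"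
    proof -
      have "bmat_right n b xs $$ (i,j) = (\<Sum>m<n. \<Sum>l<n. unit_vec n j $ m * xs $ l * \<beta> i m l)"
        unfolding bmat_right_def using i j bexp[OF uc xs(1) i] by (simp add: Bf_def del: index_unit_vec)
      also have "\<dots> = (\<Sum>l<n. \<Sum>m<n. unit_vec n j $ m * xs $ l * \<beta> i m l)" by (rule sum.swap)
      also have "\<dots> = (\<Sum>l<n. xs $ l * \<beta> i j l)" by (intro sum.cong refl sum_unit3[OF j])
      finally show ?thesis .
    qed
    have c1: "bmat_left n b xs \<in> carrier_mat n n" "bmat_right n b xs \<in> carrier_mat n n"
      unfolding bmat_left_def bmat_right_def by auto
    show ?thesis unfolding J_def Jm_def using i j P(1) L R c1 by (simp add: carrier_matD)
  qed
  have J0: "\<forall>i<n. \<forall>j<n. J $$ (i,j) \<ge> 0" using Jij Jm0 by simp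
  define dv where "dv k = vec n (d k)" for k
  have dvc: "dv k \<in> carrier_vec n" for k unfolding dv_def by simp
  have JDv: "(J *\<^sub>v dv k) $ i = JD k i" if "i < n" for k i
    unfolding mv_sum[OF Jc dvc that] JD_def using that Jij by (simp add: dv_def)
  have main: "real_spectral_radius J \<le> c" if c: "c > 1" for c
  proof -
    define e where "e = 1 - 1 / c"
    have e0: "e \<ge> 0" using c unfolding e_def by simp
    have e1: "c * (1 - e) = 1" using c unfolding e_def by simp
    have "\<forall>\<^sub>F k in sequentially. \<forall>l\<in>{..<n}. d k l < (1/2 * e) * d 0 l"
    proof (rule eventually_ball_finite)
      show "finite {..<n}" by simp
      show "\<forall>l\<in>{..<n}. \<forall>\<^sub>F k in sequentially. d k l < (1/2 * e) * d 0 l"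
      proof
        fix l assume l: "l \<in> {..<n}"
        have "0 < (1/2 * e) * d 0 l" using dpos l c unfolding e_def by (simp add: field_simps)
        then show "\<forall>\<^sub>F k in sequentially. d k l < (1/2 * e) * d 0 l" using dlim l order_tendstoD(2) by blast
      qed
    qed
    then obtain K where K0: "\<And>k. k \<ge> K \<Longrightarrow> \<forall>l\<in>{..<n}. d k l < (1/2 * e) * d 0 l"
      unfolding eventually_sequentially by blast
    have K: "\<forall>l<n. d k l \<le> e * d 0 l" if k: "k \<ge> K" for k
    proof (intro allI impI)
      fix l assume l: "l < n"
      have "d k l < (1/2 * e) * d 0 l" using K0[OF k] l by simp
      also have "\<dots> \<le> e * d 0 l" using e0 dpos[OF l] by (intro mult_right_mono, auto)
      finally show "d k l \<le> e * d 0 l" by simp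
    qed
    have JDc: "JD k i \<le> c * d (Suc k) i" if k: "k \<ge> K" and i: "i < n" for k i
    proof -
      have "d (Suc k) i \<ge> JD k i - e * JD k i" using drec2[OF i, of k] lemB[OF i e0 K[OF k]] by linarith
      then have "c * (JD k i - e * JD k i) \<le> c * d (Suc k) i" using c by (intro mult_left_mono, auto)
      moreover have "c * (JD k i - e * JD k i) = (c * (1 - e)) * JD k i" by (simp add: algebra_simps)
      then have "c * (JD k i - e * JD k i) = JD k i" using e1 by simp
      ultimately show ?thesis by simp
    qed
    have Cex: "\<exists>C. C \<ge> 1 \<and> (\<forall>i<n. JD k i \<le> C * d (Suc k) i)" for k
    proof (intro exI conjI allI impI)
      define C where "C = 1 + (\<Sum>i<n. JD k i / d (Suc k) i)"
      have nn: "\<forall>i\<in>{..<n}. JD k i / d (Suc k) i \<ge> 0" using JDnn dnn by simp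
      have "0 \<le> (\<Sum>i<n. JD k i / d (Suc k) i)" using nn by (intro sum_nonneg) auto
      then show "1 \<le> C" unfolding C_def by simp
      fix i assume i: "i < n"
      show "JD k i \<le> C * d (Suc k) i"
      proof (cases "d (Suc k) i = 0")
        case True then show ?thesis using lemA[OF i True] by simp
      next
        case False
        then have dp: "d (Suc k) i > 0" using dnn[OF i, of "Suc k"] by simp
        have "JD k i / d (Suc k) i \<le> (\<Sum>i<n. JD k i / d (Suc k) i)"
          using nn i by (intro member_le_sum, auto)
        then have "JD k i / d (Suc k) i \<le> C" unfolding C_def by simp
        then show ?thesis using dp by (simp add: divide_le_eq)
      qed
    qed
    then obtain Cs where Cs: "\<And>k. Cs k \<ge> 1 \<and> (\<forall>i<n. JD k i \<le> Cs k * d (Suc k) i)" by metis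
    define Cf where "Cf k = (if K \<le> k then c else Cs k)" for k
    have Cf1: "Cf k \<ge> 1" for k unfolding Cf_def using Cs c by auto
    have CfJ: "JD k i \<le> Cf k * d (Suc k) i" if "i < n" for k i
      unfolding Cf_def using Cs JDc that by auto
    have Mnn: "\<forall>i<n. \<forall>j<n. (J ^\<^sub>m m) $$ (i,j) \<ge> 0" for m by (rule pow_nonneg[OF Jc J0])
    have iter: "\<forall>k i. i < n \<longrightarrow> (J ^\<^sub>m m *\<^sub>v dv k) $ i \<le> prod Cf {k..<k+m} * d (k+m) i" for m
    proof (induction m)
      case 0 then show ?case using Jc by (simp add: dv_def)
    next
      case (Suc m)
      show ?case
      proof (intro allI impI)
        fix k i assume i: "i < n"
        have Mc: "J ^\<^sub>m m \<in> carrier_mat n n" using Jc by simp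
        have "(J ^\<^sub>m Suc m *\<^sub>v dv k) = J ^\<^sub>m m *\<^sub>v (J *\<^sub>v dv k)"
          using assoc_mult_mat_vec[OF Mc Jc dvc] by simp
        also have "\<dots> $ i \<le> (J ^\<^sub>m m *\<^sub>v (Cf k \<cdot>\<^sub>v dv (Suc k))) $ i"
          using i CfJ JDv Jc by (intro mv_mono[OF Mc Mnn], auto simp: dvc dv_def)
        also have "\<dots> = Cf k * (J ^\<^sub>m m *\<^sub>v dv (Suc k)) $ i"
        proof -
          have dd: "dim_vec (J ^\<^sub>m m *\<^sub>v dv (Suc k)) = n" using Mc Jc by (simp add: carrier_matD)
          show ?thesis using mult_mat_vec[OF Mc dvc] i dd by (simp del: pow_mat.simps)
        qed
        also have "\<dots> \<le> Cf k * (prod Cf {Suc k..<Suc k+m} * d (Suc k+m) i)"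
        proof -
          have h: "(J ^\<^sub>m m *\<^sub>v dv (Suc k)) $ i \<le> prod Cf {Suc k..<Suc k+m} * d (Suc k+m) i"
            using Suc.IH i by blast
          show ?thesis using mult_left_mono[OF h, of "Cf k"] Cf1[of k] by linarith
        qed
        also have "\<dots> = prod Cf {k..<k + Suc m} * d (k + Suc m) i"
          by (simp add: prod.atLeast_Suc_lessThan)
        finally show "(J ^\<^sub>m Suc m *\<^sub>v dv k) $ i \<le> prod Cf {k..<k + Suc m} * d (k + Suc m) i" .
      qed
    qed
    define A where "A = prod Cf {0..<K}"
    have A1: "A \<ge> 1" unfolding A_def using Cf1 by (intro prod_ge_1, auto)
    have Gb: "prod Cf {0..<m} \<le> A * c ^ m" for m
    proof (cases "m \<le> K")
      case True
      have "A = prod Cf {0..<m} * prod Cf {m..<K}" unfolding A_def using True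
        by (simp add: prod.atLeastLessThan_concat)
      moreover have "prod Cf {m..<K} \<ge> 1" using Cf1 by (intro prod_ge_1, auto)
      moreover have "prod Cf {0..<m} \<ge> 0" using Cf1 by (intro prod_nonneg, auto intro: order_trans[OF zero_le_one])
      moreover have "c ^ m \<ge> 1" using c by simp
      ultimately show ?thesis using A1
        by (metis mult.commute mult_le_cancel_left1 mult_mono order_trans zero_le_one le_less)
    next
      case False
      have "prod Cf {0..<m} = A * prod Cf {K..<m}" unfolding A_def using False
        by (simp add: prod.atLeastLessThan_concat)
      also have "prod Cf {K..<m} = c ^ (m - K)" unfolding Cf_def by simp
      also have "c ^ (m - K) \<le> c ^ m" using c by (intro power_increasing, auto)
      finally show ?thesis using A1 by (simp add: mult_left_mono)
    qed
    show ?thesis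
    proof (rule sr_bound[OF Jc _ _, of _ "\<lambda>i j. A * d 0 i / d 0 j"])
      show "n > 0" using n by simp
      show "c > 0" using c by simp
      fix m i j assume i: "i < n" and j: "j < n"
      let ?M = "J ^\<^sub>m m"
      have Mc: "?M \<in> carrier_mat n n" using Jc by simp
      show "0 \<le> ?M $$ (i,j) \<and> ?M $$ (i,j) \<le> A * d 0 i / d 0 j * c ^ m"
      proof
        show "0 \<le> ?M $$ (i,j)" using Mnn i j by auto
        have "?M $$ (i,j) * d 0 j \<le> (\<Sum>l<n. ?M $$ (i,l) * d 0 l)"
          using Mnn dnn i j by (intro member_le_sum, auto)
        also have "\<dots> = (?M *\<^sub>v dv 0) $ i" unfolding mv_sum[OF Mc dvc i] by (simp add: dv_def)
        also have "\<dots> \<le> prod Cf {0..<m} * d m i" using iter[of m, rule_format, of i 0] i by simp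
        also have "\<dots> \<le> (A * c ^ m) * d 0 i"
        proof (rule mult_mono[OF Gb])
          have "d m i \<le> d 0 i" using dmono i by (induction m, auto intro: order_trans)
          then show "d m i \<le> d 0 i" .
        qed (use c A1 dnn i in auto)
        finally have "?M $$ (i,j) * d 0 j \<le> A * c ^ m * d 0 i" .
        then show "?M $$ (i,j) \<le> A * d 0 i / d 0 j * c ^ m" using dpos[OF j]
          by (simp add: field_simps)
      qed
    qed
  qed
  show ?thesis unfolding J_def[symmetric] by (rule dense_ge, rule main)
qed
end
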